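(* Under the hypotheses of the preceding result (a subsystem $(B-A)X=0$ of $Eq(\mathfrak g,\mathcal E)$ with $p$ equations, $\sum_t(B_t-A_t)=(1,\dots,1)$, and a permutation $\pi$ with permutation matrix $P$ such that the first $p-1$ rows of $PB-P^+A$ are nonnegative), assume moreover that $\ell=|Con(\mathfrak g,\mathcal E)|=3$, that the row $A_{\pi(1)}$ contains exactly one entry equal to $1$, and that $G$ contains no free subgroup of rank two. Then $\tau(G)=5$.
   Context: Configurations: for $\mathfrak g=(g_1,\dots,g_n)$ and a partition $\mathcal E=\{E_1,\dots,E_m\}$ of a group $G$, a configuration is $C=(c_0,\dots,c_n)\in\{1,\dots,m\}^{n+1}$ such that some $x\in G$ has $x\in E_{c_0}$ and $g_ix\in E_{c_i}$; $Con(\mathfrak g,\mathcal E)$ is the set of configurations. $Eq(\mathfrak g,\mathcal E)$: variables $f_C$, equations $\sum_{C:\,c_j=i}f_C=\sum_{C:\,c_k=i}f_C$ ($1\le i\le m$, $0\le j,k\le n$), each written $aX=bX$ with $a,b\in\{0,1\}^\ell$ indicator vectors; a subsystem is a finite list (repetitions allowed, sides may be swapped) of such equations $A_tX=B_tX$. Row $i$ of $PM$ is row $\pi(i)$ of $M$; $P^+$ is $P$ with rows cyclically shifted up by one (rows $P_2,\dots,P_p,P_1$). Tarski number $\tau(G)$: minimum of $r+s$ over complete paradoxical decompositions, i.e. partitions $\{A_1,\dots,A_r,B_1,\dots,B_s\}$ of $G$ with $a_i,b_j\in G$ such that $\{a_iA_i\}$ and $\{b_jB_j\}$ each partition $G$.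 *)

theory Defs
  imports "HOL-Algebra.Group" "HOL-Combinatorics.Permutations" "HOL-Library.Extended_Nat"
begin

definition is_partition :: "('a, 'b) monoid_scheme \<Rightarrow> (nat \<Rightarrow> 'a set) \<Rightarrow> nat \<Rightarrow> bool" where
  "is_partition G E m \<longleftrightarrow>
     (\<forall>i\<in>{1..m}. E i \<noteq> {} \<and> E i \<subseteq> carrier G) \<and>
     (\<forall>i\<in>{1..m}. \<forall>j\<in>{1..m}. i \<noteq> j \<longrightarrow> E i \<inter> E j = {}) \<and>
     (\<Union>i\<in>{1..m}. E i) = carrier G"

text \<open>Configurations: g = [g_1,...,g_n] (g_i = g ! (i-1)); a configuration is a list
  C = [c_0,...,c_n] with entries in {1..m} such that some x has x in E c_0 and g_i x in E c_i.\<close>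
definition Con :: "('a, 'b) monoid_scheme \<Rightarrow> 'a list \<Rightarrow> (nat \<Rightarrow> 'a set) \<Rightarrow> nat \<Rightarrow> nat list set" where
  "Con G g E m = {C. length C = Suc (length g) \<and> (\<forall>i<length C. C ! i \<in> {1..m}) \<and>
     (\<exists>x\<in>carrier G. x \<in> E (C ! 0) \<and>
        (\<forall>i\<in>{1..length g}. (g ! (i - 1)) \<otimes>\<^bsub>G\<^esub> x \<in> E (C ! i)))}"

text \<open>Vectors in the variables f_C are indexed by the configurations themselves.
  (a, b) is an equation a X = b X of Eq(g,E): for some i in {1..m} and j, k in {0..n},
  a and b are the indicator vectors of {C. c_j = i} and {C. c_k = i}.\<close>
definition is_Eq_equation :: "('a, 'b) monoid_scheme \<Rightarrow> 'a list \<Rightarrow> (nat \<Rightarrow> 'a set) \<Rightarrow> nat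
    \<Rightarrow> (nat list \<Rightarrow> int) \<Rightarrow> (nat list \<Rightarrow> int) \<Rightarrow> bool" where
  "is_Eq_equation G g E m a b \<longleftrightarrow>
     (\<exists>i\<in>{1..m}. \<exists>j\<le>length g. \<exists>k\<le>length g. \<forall>C\<in>Con G g E m.
        a C = (if C ! j = i then 1 else 0) \<and> b C = (if C ! k = i then 1 else 0))"

definition complete_paradoxical :: "('a, 'b) monoid_scheme \<Rightarrow> nat \<Rightarrow> nat \<Rightarrow> bool" where
  "complete_paradoxical G r s \<longleftrightarrow>
    (\<exists>A B :: nat \<Rightarrow> 'a set. \<exists>a b :: nat \<Rightarrow> 'a.
      (\<forall>i\<in>{1..r}. A i \<subseteq> carrier G \<and> a i \<in> carrier G) \<and>
      (\<forall>j\<in>{1..s}. B j \<subseteq> carrier G \<and> b j \<in> carrier G) \<and>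
      (\<forall>i\<in>{1..r}. \<forall>i'\<in>{1..r}. i \<noteq> i' \<longrightarrow> A i \<inter> A i' = {}) \<and>
      (\<forall>j\<in>{1..s}. \<forall>j'\<in>{1..s}. j \<noteq> j' \<longrightarrow> B j \<inter> B j' = {}) \<and>
      (\<forall>i\<in>{1..r}. \<forall>j\<in>{1..s}. A i \<inter> B j = {}) \<and>
      (\<Union>i\<in>{1..r}. A i) \<union> (\<Union>j\<in>{1..s}. B j) = carrier G \<and>
      (\<forall>i\<in>{1..r}. \<forall>i'\<in>{1..r}. i \<noteq> i' \<longrightarrow>
          ((\<otimes>\<^bsub>G\<^esub>) (a i) ` A i) \<inter> ((\<otimes>\<^bsub>G\<^esub>) (a i') ` A i') = {}) \<and>
      (\<Union>i\<in>{1..r}. (\<otimes>\<^bsub>G\<^esub>) (a i) ` A i) = carrier G \<and>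
      (\<forall>j\<in>{1..s}. \<forall>j'\<in>{1..s}. j \<noteq> j' \<longrightarrow>
          ((\<otimes>\<^bsub>G\<^esub>) (b j) ` B j) \<inter> ((\<otimes>\<^bsub>G\<^esub>) (b j') ` B j') = {}) \<and>
      (\<Union>j\<in>{1..s}. (\<otimes>\<^bsub>G\<^esub>) (b j) ` B j) = carrier G)"

text \<open>Tarski number (infinity if G admits no paradoxical decomposition).\<close>
definition tarski_number :: "('a, 'b) monoid_scheme \<Rightarrow> enat" where
  "tarski_number G = Inf {enat (r + s) | r s. complete_paradoxical G r s}"

text \<open>Words in two letters: (letter, inverted?), letter False = first generator.\<close>
fun eval_word :: "('a, 'b) monoid_scheme \<Rightarrow> 'a \<Rightarrow> 'a \<Rightarrow> (bool \<times> bool) list \<Rightarrow> 'a" where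
  "eval_word G x y [] = \<one>\<^bsub>G\<^esub>"
| "eval_word G x y ((l, e) # w) =
     (let z = (if l then y else x) in (if e then inv\<^bsub>G\<^esub> z else z)) \<otimes>\<^bsub>G\<^esub> eval_word G x y w"

fun reduced_word :: "(bool \<times> bool) list \<Rightarrow> bool" where
  "reduced_word [] = True"
| "reduced_word [_] = True"
| "reduced_word ((l, e) # (l', e') # w) = (\<not> (l = l' \<and> e \<noteq> e') \<and> reduced_word ((l', e') # w))"

definition has_free_subgroup_rank2 :: "('a, 'b) monoid_scheme \<Rightarrow> bool" where
  "has_free_subgroup_rank2 G \<longleftrightarrow>
     (\<exists>x\<in>carrier G. \<exists>y\<in>carrier G. \<forall>w. w \<noteq> [] \<and> reduced_word w \<longrightarrow> eval_word G x y w \<noteq> \<one>\<^bsub>G\<^esub>)"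

end

theory Submission
  imports Defs
begin


lemma lcanc: "group G \<Longrightarrow> c \<in> carrier G \<Longrightarrow> y \<in> carrier G \<Longrightarrow> z \<in> carrier G \<Longrightarrow>
   c \<otimes>\<^bsub>G\<^esub> y = c \<otimes>\<^bsub>G\<^esub> z \<Longrightarrow> y = z"
  by (metis group.Units_eq monoid.Units_l_cancel group.is_monoid)

lemma transl_full:
  assumes "group G" "c \<in> carrier G" "S \<subseteq> carrier G" "(\<otimes>\<^bsub>G\<^esub>) c ` S = carrier G"
  shows "S = carrier G"
proof
  show "carrier G \<subseteq> S"
  proof
    fix y assume y: "y \<in> carrier G"
    have "c \<otimes>\<^bsub>G\<^esub> y \<in> carrier G" using y assms(1,2) by (simp add: group.is_monoid monoid.m_closed)
    then have "c \<otimes>\<^bsub>G\<^esub> y \<in> (\<otimes>\<^bsub>G\<^esub>) c ` S" using assms(4) by simp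
    then obtain z where z: "z \<in> S" "c \<otimes>\<^bsub>G\<^esub> y = c \<otimes>\<^bsub>G\<^esub> z" by (rule imageE) simp
    then have "y = z" using y assms(1,2,3) lcanc[of G c y z] by blast
    then show "y \<in> S" using z by simp
  qed
qed (rule assms(3))

lemma cp_sym:
  assumes "complete_paradoxical G r s" shows "complete_paradoxical G s r"
proof -
  from assms obtain A B :: "nat \<Rightarrow> 'a set" and a b where
    h1: "\<forall>i\<in>{1..r}. A i \<subseteq> carrier G \<and> a i \<in> carrier G" and
    h2: "\<forall>j\<in>{1..s}. B j \<subseteq> carrier G \<and> b j \<in> carrier G" and
    h3: "\<forall>i\<in>{1..r}. \<forall>i'\<in>{1..r}. i \<noteq> i' \<longrightarrow> A i \<inter> A i' = {}" and
    h4: "\<forall>j\<in>{1..s}. \<forall>j'\<in>{1..s}. j \<noteq> j' \<longrightarrow> B j \<inter> B j' = {}" and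
    h5: "\<forall>i\<in>{1..r}. \<forall>j\<in>{1..s}. A i \<inter> B j = {}" and
    h6: "(\<Union>i\<in>{1..r}. A i) \<union> (\<Union>j\<in>{1..s}. B j) = carrier G" and
    h7: "\<forall>i\<in>{1..r}. \<forall>i'\<in>{1..r}. i \<noteq> i' \<longrightarrow>
          ((\<otimes>\<^bsub>G\<^esub>) (a i) ` A i) \<inter> ((\<otimes>\<^bsub>G\<^esub>) (a i') ` A i') = {}" and
    h8: "(\<Union>i\<in>{1..r}. (\<otimes>\<^bsub>G\<^esub>) (a i) ` A i) = carrier G" and
    h9: "\<forall>j\<in>{1..s}. \<forall>j'\<in>{1..s}. j \<noteq> j' \<longrightarrow>
          ((\<otimes>\<^bsub>G\<^esub>) (b j) ` B j) \<inter> ((\<otimes>\<^bsub>G\<^esub>) (b j') ` B j') = {}" and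
    h10: "(\<Union>j\<in>{1..s}. (\<otimes>\<^bsub>G\<^esub>) (b j) ` B j) = carrier G"
    unfolding complete_paradoxical_def by (elim exE conjE) (rule that; assumption)
  have h5': "\<forall>j\<in>{1..s}. \<forall>i\<in>{1..r}. B j \<inter> A i = {}" using h5 by blast
  have h6': "(\<Union>j\<in>{1..s}. B j) \<union> (\<Union>i\<in>{1..r}. A i) = carrier G" using h6 by (simp add: Un_commute)
  show ?thesis unfolding complete_paradoxical_def
    apply (rule exI[of _ B], rule exI[of _ A], rule exI[of _ b], rule exI[of _ a])
    by (intro conjI h1 h2 h3 h4 h5' h6' h7 h8 h9 h10)
qed

lemma cp_r_ge2:
  assumes grp: "group G" and cp: "complete_paradoxical G r s"
  shows "r \<ge> 2"
proof (rule ccontr)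
  assume "\<not> r \<ge> 2"
  then have r: "r = 0 \<or> r = 1" by auto
  interpret group G by fact
  from cp obtain A B a b where
    h1: "\<forall>i\<in>{1..r}. A i \<subseteq> carrier G \<and> a i \<in> carrier G" and
    h2: "\<forall>j\<in>{1..s}. B j \<subseteq> carrier G \<and> b j \<in> carrier G" and
    h5: "\<forall>i\<in>{1..r}. \<forall>j\<in>{1..s}. A i \<inter> B j = {}" and
    h6: "(\<Union>i\<in>{1..r}. A i) \<union> (\<Union>j\<in>{1..s}. B j) = carrier G" and
    h8: "(\<Union>i\<in>{1..r}. (\<otimes>\<^bsub>G\<^esub>) (a i) ` A i) = carrier G" and
    h10: "(\<Union>j\<in>{1..s}. (\<otimes>\<^bsub>G\<^esub>) (b j) ` B j) = carrier G"
    unfolding complete_paradoxical_def by (elim exE conjE) (rule that; assumption)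
  show False
  proof (cases "r = 0")
    case True
    then show False using h8 one_closed by auto
  next
    case False
    with r have r1: "r = 1" by simp
    then have "(\<otimes>\<^bsub>G\<^esub>) (a 1) ` A 1 = carrier G" using h8 by simp
    then have A1: "A 1 = carrier G" using transl_full[OF grp] h1 r1 by auto
    have "\<forall>j\<in>{1..s}. B j = {}" using h5 h2 A1 r1 by auto
    then have "(\<Union>j\<in>{1..s}. (\<otimes>\<^bsub>G\<^esub>) (b j) ` B j) = {}" by auto
    then show False using h10 one_closed by auto
  qed
qed

lemma cp_s_ge2: "group G \<Longrightarrow> complete_paradoxical G r s \<Longrightarrow> s \<ge> 2"
  using cp_r_ge2 cp_sym by blast

lemma pingpong_pair:
  assumes grp: "group G" and c: "c1 \<in> carrier G" "c2 \<in> carrier G"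
    and UV: "U \<subseteq> carrier G" "V \<subseteq> carrier G"
    and disj: "((\<otimes>\<^bsub>G\<^esub>) c1 ` U) \<inter> ((\<otimes>\<^bsub>G\<^esub>) c2 ` V) = {}"
    and un: "((\<otimes>\<^bsub>G\<^esub>) c1 ` U) \<union> ((\<otimes>\<^bsub>G\<^esub>) c2 ` V) = carrier G"
  shows "\<forall>u\<in>carrier G - V. (inv\<^bsub>G\<^esub> c1 \<otimes>\<^bsub>G\<^esub> c2) \<otimes>\<^bsub>G\<^esub> u \<in> U"
    and "\<forall>u\<in>carrier G - U. inv\<^bsub>G\<^esub> (inv\<^bsub>G\<^esub> c1 \<otimes>\<^bsub>G\<^esub> c2) \<otimes>\<^bsub>G\<^esub> u \<in> V"
proof -
  interpret group G by fact
  show "\<forall>u\<in>carrier G - V. (inv\<^bsub>G\<^esub> c1 \<otimes>\<^bsub>G\<^esub> c2) \<otimes>\<^bsub>G\<^esub> u \<in> U"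
  proof
    fix u assume u: "u \<in> carrier G - V"
    have cu: "c2 \<otimes>\<^bsub>G\<^esub> u \<in> carrier G" using u c by auto
    have "c2 \<otimes>\<^bsub>G\<^esub> u \<notin> (\<otimes>\<^bsub>G\<^esub>) c2 ` V"
    proof
      assume "c2 \<otimes>\<^bsub>G\<^esub> u \<in> (\<otimes>\<^bsub>G\<^esub>) c2 ` V"
      then obtain v where "v \<in> V" "c2 \<otimes>\<^bsub>G\<^esub> u = c2 \<otimes>\<^bsub>G\<^esub> v" by auto
      then have "u = v" using u c UV lcanc[OF grp, of c2 u v] by blast
      then show False using u \<open>v \<in> V\<close> by simp
    qed
    then obtain z where z: "z \<in> U" "c2 \<otimes>\<^bsub>G\<^esub> u = c1 \<otimes>\<^bsub>G\<^esub> z" using un cu by blast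
    have zG: "z \<in> carrier G" using z UV by auto
    have "(inv\<^bsub>G\<^esub> c1 \<otimes>\<^bsub>G\<^esub> c2) \<otimes>\<^bsub>G\<^esub> u = inv\<^bsub>G\<^esub> c1 \<otimes>\<^bsub>G\<^esub> (c2 \<otimes>\<^bsub>G\<^esub> u)" using c u by (simp add: m_assoc)
    also have "\<dots> = z" using z c zG by (simp add: m_assoc[symmetric])
    finally show "(inv\<^bsub>G\<^esub> c1 \<otimes>\<^bsub>G\<^esub> c2) \<otimes>\<^bsub>G\<^esub> u \<in> U" using z by simp
  qed
  show "\<forall>u\<in>carrier G - U. inv\<^bsub>G\<^esub> (inv\<^bsub>G\<^esub> c1 \<otimes>\<^bsub>G\<^esub> c2) \<otimes>\<^bsub>G\<^esub> u \<in> V"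
  proof
    fix u assume u: "u \<in> carrier G - U"
    have cu: "c1 \<otimes>\<^bsub>G\<^esub> u \<in> carrier G" using u c by auto
    have "c1 \<otimes>\<^bsub>G\<^esub> u \<notin> (\<otimes>\<^bsub>G\<^esub>) c1 ` U"
    proof
      assume "c1 \<otimes>\<^bsub>G\<^esub> u \<in> (\<otimes>\<^bsub>G\<^esub>) c1 ` U"
      then obtain v where "v \<in> U" "c1 \<otimes>\<^bsub>G\<^esub> u = c1 \<otimes>\<^bsub>G\<^esub> v" by auto
      then have "u = v" using u c UV lcanc[OF grp, of c1 u v] by blast
      then show False using u \<open>v \<in> U\<close> by simp
    qed
    then obtain z where z: "z \<in> V" "c1 \<otimes>\<^bsub>G\<^esub> u = c2 \<otimes>\<^bsub>G\<^esub> z" using un cu by blast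
    have zG: "z \<in> carrier G" using z UV by auto
    have "inv\<^bsub>G\<^esub> (inv\<^bsub>G\<^esub> c1 \<otimes>\<^bsub>G\<^esub> c2) = inv\<^bsub>G\<^esub> c2 \<otimes>\<^bsub>G\<^esub> c1" using c by (simp add: inv_mult_group)
    then have "inv\<^bsub>G\<^esub> (inv\<^bsub>G\<^esub> c1 \<otimes>\<^bsub>G\<^esub> c2) \<otimes>\<^bsub>G\<^esub> u = inv\<^bsub>G\<^esub> c2 \<otimes>\<^bsub>G\<^esub> (c1 \<otimes>\<^bsub>G\<^esub> u)" using c u by (simp add: m_assoc)
    also have "\<dots> = z" using z c zG by (simp add: m_assoc[symmetric])
    finally show "inv\<^bsub>G\<^esub> (inv\<^bsub>G\<^esub> c1 \<otimes>\<^bsub>G\<^esub> c2) \<otimes>\<^bsub>G\<^esub> u \<in> V" using z by simp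
  qed
qed

lemma eval_word_closed:
  "group G \<Longrightarrow> x \<in> carrier G \<Longrightarrow> y \<in> carrier G \<Longrightarrow> eval_word G x y w \<in> carrier G"
proof (induction w)
  case Nil then show ?case by (simp add: group.is_monoid monoid.one_closed)
next
  case (Cons le w)
  then show ?case
    by (cases le) (auto simp: Let_def group.inv_closed monoid.m_closed group.is_monoid)
qed

lemma pingpong_words:
  fixes P :: "bool \<times> bool \<Rightarrow> 'a set"
  assumes grp: "group G" and xy: "x \<in> carrier G" "y \<in> carrier G"
    and PG: "\<And>k. P k \<subseteq> carrier G"
    and Pdisj: "\<And>k k'. k \<noteq> k' \<Longrightarrow> P k \<inter> P k' = {}"
    and mapx: "\<forall>u\<in>carrier G - P (False, True). x \<otimes>\<^bsub>G\<^esub> u \<in> P (False, False)"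
    and mapxi: "\<forall>u\<in>carrier G - P (False, False). inv\<^bsub>G\<^esub> x \<otimes>\<^bsub>G\<^esub> u \<in> P (False, True)"
    and mapy: "\<forall>u\<in>carrier G - P (True, True). y \<otimes>\<^bsub>G\<^esub> u \<in> P (True, False)"
    and mapyi: "\<forall>u\<in>carrier G - P (True, False). inv\<^bsub>G\<^esub> y \<otimes>\<^bsub>G\<^esub> u \<in> P (True, True)"
  shows "w \<noteq> [] \<Longrightarrow> reduced_word w \<Longrightarrow> u \<in> carrier G \<Longrightarrow>
     u \<notin> P (fst (last w), \<not> snd (last w)) \<Longrightarrow> eval_word G x y w \<otimes>\<^bsub>G\<^esub> u \<in> P (hd w)"
proof -
  interpret group G by fact
  define lt where "lt l e = (let z = (if l then y else x) in (if e then inv\<^bsub>G\<^esub> z else z))" for l e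
  have ltG: "lt l e \<in> carrier G" for l e using xy by (cases l; cases e) (simp_all add: lt_def Let_def)
  have letter: "lt l e \<otimes>\<^bsub>G\<^esub> u \<in> P (l, e)" if "u \<in> carrier G" "u \<notin> P (l, \<not> e)" for l e u
  proof (cases l; cases e)
    assume "l" "e" then show ?thesis using that mapyi by (simp add: lt_def Let_def)
  next
    assume "l" "\<not> e" then show ?thesis using that mapy by (simp add: lt_def Let_def)
  next
    assume "\<not> l" "e" then show ?thesis using that mapxi by (simp add: lt_def Let_def)
  next
    assume "\<not> l" "\<not> e" then show ?thesis using that mapx by (simp add: lt_def Let_def)
  qed
  have ev_cons: "eval_word G x y ((l, e) # w) = lt l e \<otimes>\<^bsub>G\<^esub> eval_word G x y w" for l e w
    by (simp only: eval_word.simps lt_def)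
  show "w \<noteq> [] \<Longrightarrow> reduced_word w \<Longrightarrow> u \<in> carrier G \<Longrightarrow>
     u \<notin> P (fst (last w), \<not> snd (last w)) \<Longrightarrow> eval_word G x y w \<otimes>\<^bsub>G\<^esub> u \<in> P (hd w)"
  proof (induction w arbitrary: u rule: reduced_word.induct)
    case 1 then show ?case by simp
  next
    case (2 le)
    obtain l e where le: "le = (l, e)" by (cases le)
    have e1: "eval_word G x y [(l, e)] = lt l e \<otimes>\<^bsub>G\<^esub> \<one>\<^bsub>G\<^esub>" using ev_cons[of l e "[]"] by simp
    have "lt l e \<otimes>\<^bsub>G\<^esub> \<one>\<^bsub>G\<^esub> = lt l e" using ltG by simp
    moreover have "u \<notin> P (l, \<not> e)" using 2(4) le by simp
    ultimately have "eval_word G x y [(l, e)] \<otimes>\<^bsub>G\<^esub> u \<in> P (l, e)"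
      using e1 letter[OF 2(3)] by simp
    then show ?case using le by simp
  next
    case (3 l e l' e' w)
    have rw: "\<not> (l = l' \<and> e \<noteq> e') \<and> reduced_word ((l', e') # w)"
      using 3(3) by (subst (asm) reduced_word.simps(3)) assumption
    then have red: "reduced_word ((l', e') # w)" and ne: "\<not> (l = l' \<and> e \<noteq> e')" by (rule conjunct2, rule conjunct1)
    have ev: "eval_word G x y ((l', e') # w) \<in> carrier G" by (rule eval_word_closed[OF grp xy])
    have u5: "u \<notin> P (fst (last ((l', e') # w)), \<not> snd (last ((l', e') # w)))" using 3(5) by simp
    have v0: "eval_word G x y ((l', e') # w) \<otimes>\<^bsub>G\<^esub> u \<in> P (hd ((l', e') # w))"
      using 3(1)[OF _ red 3(4) u5] by simp
    then have v: "eval_word G x y ((l', e') # w) \<otimes>\<^bsub>G\<^esub> u \<in> P (l', e')" by simp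
    have "(l', e') \<noteq> (l, \<not> e)" using ne by auto
    then have nv: "eval_word G x y ((l', e') # w) \<otimes>\<^bsub>G\<^esub> u \<notin> P (l, \<not> e)"
      using v Pdisj[of "(l', e')" "(l, \<not> e)"] by blast
    have vG: "eval_word G x y ((l', e') # w) \<otimes>\<^bsub>G\<^esub> u \<in> carrier G" using ev 3(4) by simp
    have "lt l e \<otimes>\<^bsub>G\<^esub> (eval_word G x y ((l', e') # w) \<otimes>\<^bsub>G\<^esub> u) \<in> P (l, e)"
      using letter[OF vG nv] .
    moreover have "eval_word G x y ((l, e) # (l', e') # w) \<otimes>\<^bsub>G\<^esub> u
       = lt l e \<otimes>\<^bsub>G\<^esub> (eval_word G x y ((l', e') # w) \<otimes>\<^bsub>G\<^esub> u)"
      using ev_cons[of l e "(l', e') # w"] m_assoc[OF ltG ev 3(4)] by simp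
    ultimately show ?case by simp
  qed
qed


lemma two_set: "{1..2::nat} = {1,2}" by auto

lemma ex_other: "\<exists>k3::bool \<times> bool. k3 \<noteq> k1 \<and> k3 \<noteq> k2"
proof (cases "k1 = (True, True) \<or> k2 = (True, True)")
  case False then show ?thesis by (intro exI[of _ "(True, True)"]) auto
next
  case T: True
  show ?thesis
  proof (cases "k1 = (False, False) \<or> k2 = (False, False)")
    case False then show ?thesis by (intro exI[of _ "(False, False)"]) auto
  next
    case True
    then have "(True, False) \<noteq> k1 \<and> (True, False) \<noteq> k2" using T by auto
    then show ?thesis by blast
  qed
qed

lemma free_of_cp22:
  assumes grp: "group G" and cp: "complete_paradoxical G 2 2"
  shows "has_free_subgroup_rank2 G"
proof -
  from cp obtain A B :: "nat \<Rightarrow> 'a set" and a b where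
    h1: "\<forall>i\<in>{1..2}. A i \<subseteq> carrier G \<and> a i \<in> carrier G" and
    h2: "\<forall>j\<in>{1..2}. B j \<subseteq> carrier G \<and> b j \<in> carrier G" and
    h3: "\<forall>i\<in>{1..2}. \<forall>i'\<in>{1..2}. i \<noteq> i' \<longrightarrow> A i \<inter> A i' = {}" and
    h4: "\<forall>j\<in>{1..2}. \<forall>j'\<in>{1..2}. j \<noteq> j' \<longrightarrow> B j \<inter> B j' = {}" and
    h5: "\<forall>i\<in>{1..2}. \<forall>j\<in>{1..2}. A i \<inter> B j = {}" and
    h6: "(\<Union>i\<in>{1..2}. A i) \<union> (\<Union>j\<in>{1..2}. B j) = carrier G" and
    h7: "\<forall>i\<in>{1..2}. \<forall>i'\<in>{1..2}. i \<noteq> i' \<longrightarrow>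
          ((\<otimes>\<^bsub>G\<^esub>) (a i) ` A i) \<inter> ((\<otimes>\<^bsub>G\<^esub>) (a i') ` A i') = {}" and
    h8: "(\<Union>i\<in>{1..2}. (\<otimes>\<^bsub>G\<^esub>) (a i) ` A i) = carrier G" and
    h9: "\<forall>j\<in>{1..2}. \<forall>j'\<in>{1..2}. j \<noteq> j' \<longrightarrow>
          ((\<otimes>\<^bsub>G\<^esub>) (b j) ` B j) \<inter> ((\<otimes>\<^bsub>G\<^esub>) (b j') ` B j') = {}" and
    h10: "(\<Union>j\<in>{1..2}. (\<otimes>\<^bsub>G\<^esub>) (b j) ` B j) = carrier G"
    unfolding complete_paradoxical_def by (elim exE conjE) (rule that; assumption)
  have A1: "A 1 \<subseteq> carrier G" "a 1 \<in> carrier G" and A2: "A 2 \<subseteq> carrier G" "a 2 \<in> carrier G"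
    and B1: "B 1 \<subseteq> carrier G" "b 1 \<in> carrier G" and B2: "B 2 \<subseteq> carrier G" "b 2 \<in> carrier G"
    using h1 h2 unfolding two_set by simp_all
  have dA: "A 1 \<inter> A 2 = {}" using h3 unfolding two_set by simp
  have dB: "B 1 \<inter> B 2 = {}" using h4 unfolding two_set by simp
  have dAB: "A 1 \<inter> B 1 = {}" "A 1 \<inter> B 2 = {}" "A 2 \<inter> B 1 = {}" "A 2 \<inter> B 2 = {}"
    using h5 unfolding two_set by simp_all
  have iA: "((\<otimes>\<^bsub>G\<^esub>) (a 1) ` A 1) \<inter> ((\<otimes>\<^bsub>G\<^esub>) (a 2) ` A 2) = {}"
    using h7 unfolding two_set by simp
  have uA: "((\<otimes>\<^bsub>G\<^esub>) (a 1) ` A 1) \<union> ((\<otimes>\<^bsub>G\<^esub>) (a 2) ` A 2) = carrier G"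
    using h8 unfolding two_set by simp
  have iB: "((\<otimes>\<^bsub>G\<^esub>) (b 1) ` B 1) \<inter> ((\<otimes>\<^bsub>G\<^esub>) (b 2) ` B 2) = {}"
    using h9 unfolding two_set by simp
  have uB: "((\<otimes>\<^bsub>G\<^esub>) (b 1) ` B 1) \<union> ((\<otimes>\<^bsub>G\<^esub>) (b 2) ` B 2) = carrier G"
    using h10 unfolding two_set by simp
  have one: "\<one>\<^bsub>G\<^esub> \<in> carrier G" using grp by (simp add: group.is_monoid monoid.one_closed)
  have iA': "((\<otimes>\<^bsub>G\<^esub>) (a 2) ` A 2) \<inter> ((\<otimes>\<^bsub>G\<^esub>) (a 1) ` A 1) = {}" using iA by blast
  have uA': "((\<otimes>\<^bsub>G\<^esub>) (a 2) ` A 2) \<union> ((\<otimes>\<^bsub>G\<^esub>) (a 1) ` A 1) = carrier G" using uA by blast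
  have iB': "((\<otimes>\<^bsub>G\<^esub>) (b 2) ` B 2) \<inter> ((\<otimes>\<^bsub>G\<^esub>) (b 1) ` B 1) = {}" using iB by blast
  have uB': "((\<otimes>\<^bsub>G\<^esub>) (b 2) ` B 2) \<union> ((\<otimes>\<^bsub>G\<^esub>) (b 1) ` B 1) = carrier G" using uB by blast
  have Bne: "B 1 \<union> B 2 \<noteq> {}"
  proof
    assume "B 1 \<union> B 2 = {}"
    then have "B 1 = {}" "B 2 = {}" by auto
    then show False using uB one by auto
  qed
  have Ane: "A 1 \<union> A 2 \<noteq> {}"
  proof
    assume "A 1 \<union> A 2 = {}"
    then have "A 1 = {}" "A 2 = {}" by auto
    then show False using uA one by auto
  qed
  have A1ne: "A 1 \<noteq> {}"
  proof
    assume e: "A 1 = {}"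
    then have "(\<otimes>\<^bsub>G\<^esub>) (a 2) ` A 2 = carrier G" using uA by simp
    then have "A 2 = carrier G" using transl_full[OF grp A2(2) A2(1)] by simp
    then show False using Bne dAB B1(1) B2(1) by blast
  qed
  have A2ne: "A 2 \<noteq> {}"
  proof
    assume e: "A 2 = {}"
    then have "(\<otimes>\<^bsub>G\<^esub>) (a 1) ` A 1 = carrier G" using uA by simp
    then have "A 1 = carrier G" using transl_full[OF grp A1(2) A1(1)] by simp
    then show False using Bne dAB B1(1) B2(1) by blast
  qed
  have B1ne: "B 1 \<noteq> {}"
  proof
    assume e: "B 1 = {}"
    then have "(\<otimes>\<^bsub>G\<^esub>) (b 2) ` B 2 = carrier G" using uB by simp
    then have "B 2 = carrier G" using transl_full[OF grp B2(2) B2(1)] by simp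
    then show False using Ane dAB A1(1) A2(1) by blast
  qed
  have B2ne: "B 2 \<noteq> {}"
  proof
    assume e: "B 2 = {}"
    then have "(\<otimes>\<^bsub>G\<^esub>) (b 1) ` B 1 = carrier G" using uB by simp
    then have "B 1 = carrier G" using transl_full[OF grp B1(2) B1(1)] by simp
    then show False using Ane dAB A1(1) A2(1) by blast
  qed
  define x where "x = inv\<^bsub>G\<^esub> (a 1) \<otimes>\<^bsub>G\<^esub> a 2"
  define y where "y = inv\<^bsub>G\<^esub> (b 1) \<otimes>\<^bsub>G\<^esub> b 2"
  have xG: "x \<in> carrier G" unfolding x_def using grp A1 A2 by (simp add: group.inv_closed group.is_monoid monoid.m_closed)
  have yG: "y \<in> carrier G" unfolding y_def using grp B1 B2 by (simp add: group.inv_closed group.is_monoid monoid.m_closed)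
  note ppA = pingpong_pair[OF grp A1(2) A2(2) A1(1) A2(1) iA uA, folded x_def]
  note ppB = pingpong_pair[OF grp B1(2) B2(2) B1(1) B2(1) iB uB, folded y_def]
  define P where "P k = (if fst k then (if snd k then B 2 else B 1) else (if snd k then A 2 else A 1))"
    for k :: "bool \<times> bool"
  have PG: "P k \<subseteq> carrier G" for k unfolding P_def using A1 A2 B1 B2 by auto
  have Pne: "P k \<noteq> {}" for k unfolding P_def using A1ne A2ne B1ne B2ne by auto
  have Pdisj: "P k \<inter> P k' = {}" if "k \<noteq> k'" for k k'
  proof -
    obtain l e l' e' where k: "k = (l, e)" "k' = (l', e')" by (cases k, cases k')
    show ?thesis using that dA dB dAB unfolding k P_def by (cases l; cases e; cases l'; cases e') auto
  qed
  have words: "w \<noteq> [] \<Longrightarrow> reduced_word w \<Longrightarrow> u \<in> carrier G \<Longrightarrow>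
     u \<notin> P (fst (last w), \<not> snd (last w)) \<Longrightarrow> eval_word G x y w \<otimes>\<^bsub>G\<^esub> u \<in> P (hd w)" for w u
    by (rule pingpong_words[OF grp xG yG PG Pdisj]) (use ppA ppB in \<open>simp_all add: P_def\<close>)
  have "\<forall>w. w \<noteq> [] \<and> reduced_word w \<longrightarrow> eval_word G x y w \<noteq> \<one>\<^bsub>G\<^esub>"
  proof (intro allI impI)
    fix w :: "(bool \<times> bool) list"
    assume wr: "w \<noteq> [] \<and> reduced_word w"
    then have wne: "w \<noteq> []" and red: "reduced_word w" by simp_all
    show "eval_word G x y w \<noteq> \<one>\<^bsub>G\<^esub>"
    proof
      assume ev1: "eval_word G x y w = \<one>\<^bsub>G\<^esub>"
      obtain k3 where k3: "k3 \<noteq> hd w" "k3 \<noteq> (fst (last w), \<not> snd (last w))"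
        using ex_other by blast
      obtain u where u: "u \<in> P k3" using Pne[of k3] by blast
      have uG: "u \<in> carrier G" using u PG by blast
      have n1: "u \<notin> P (hd w)" using u Pdisj[OF k3(1)] by blast
      have n2: "u \<notin> P (fst (last w), \<not> snd (last w))" using u Pdisj[OF k3(2)] by blast
      have "eval_word G x y w \<otimes>\<^bsub>G\<^esub> u \<in> P (hd w)" using words[OF wne red uG n2] .
      then have "u \<in> P (hd w)" using ev1 uG grp by (simp add: group.is_monoid monoid.l_one)
      then show False using n1 by simp
    qed
  qed
  then show ?thesis unfolding has_free_subgroup_rank2_def using xG yG by blast
qed

lemma cp_lower:
  assumes "group G" "\<not> has_free_subgroup_rank2 G" "complete_paradoxical G r s"
  shows "5 \<le> r + s"
proof (rule ccontr)
  assume "\<not> 5 \<le> r + s"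
  moreover have "2 \<le> r" "2 \<le> s" using cp_r_ge2[OF assms(1,3)] cp_s_ge2[OF assms(1,3)] by auto
  ultimately have "r = 2" "s = 2" by auto
  then show False using free_of_cp22[OF assms(1)] assms(2,3) by simp
qed

lemma tarski5:
  assumes "group G" "\<not> has_free_subgroup_rank2 G" "complete_paradoxical G 3 2"
  shows "tarski_number G = 5"
  unfolding tarski_number_def
proof (rule antisym)
  have "enat (3 + 2) \<in> {enat (r + s) |r s. complete_paradoxical G r s}" using assms(3) by blast
  then have "Inf {enat (r + s) |r s. complete_paradoxical G r s} \<le> enat (3 + 2)" by (rule Inf_lower)
  then show "Inf {enat (r + s) |r s. complete_paradoxical G r s} \<le> 5" by (simp add: numeral_eq_enat)
next
  show "5 \<le> Inf {enat (r + s) |r s. complete_paradoxical G r s}"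
  proof (rule Inf_greatest)
    fix z assume "z \<in> {enat (r + s) |r s. complete_paradoxical G r s}"
    then obtain r s where "z = enat (r + s)" "complete_paradoxical G r s" by blast
    then show "5 \<le> z" using cp_lower[OF assms(1,2)] by (simp add: numeral_eq_enat)
  qed
qed



lemma sum_shift_if:
  fixes g :: "nat \<Rightarrow> int"
  assumes "1 \<le> p"
  shows "(\<Sum>i\<in>{1..p}. if i < p then g (Suc i) else 0) = (\<Sum>i\<in>{1..p}. g i) - g 1"
proof -
  have "(\<Sum>i\<in>{1..p}. if i < p then g (Suc i) else 0) = (\<Sum>i\<in>{1..p} \<inter> {..<p}. g (Suc i))"
    by (simp add: sum.inter_restrict)
  also have "{1..p} \<inter> {..<p} = {1..<p}" by auto
  also have "(\<Sum>i\<in>{1..<p}. g (Suc i)) = (\<Sum>i\<in>{Suc 1..<Suc p}. g i)"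
    by (simp only: sum.shift_bounds_Suc_ivl)
  also have "{Suc 1..<Suc p} = {Suc 1..p}" by auto
  also have "(\<Sum>i\<in>{1..p}. g i) = g 1 + (\<Sum>i\<in>{Suc 1..p}. g i)"
    using assms by (simp add: sum.atLeast_Suc_atMost)
  ultimately show ?thesis by simp
qed

locale cfg = group G for G :: "('a, 'b) monoid_scheme" (structure) +
  fixes cf :: "'a \<Rightarrow> 'c" and Cn :: "'c set" and p :: nat and AA BB :: "nat \<Rightarrow> 'c \<Rightarrow> int"
    and h :: "nat \<Rightarrow> 'a" and C0 :: 'c and x0 :: 'a
  assumes cf_in: "x \<in> carrier G \<Longrightarrow> cf x \<in> Cn"
    and finCn: "finite Cn" and cardCn: "card Cn \<le> 3"
    and valsA: "i \<in> {1..p} \<Longrightarrow> x \<in> carrier G \<Longrightarrow> AA i (cf x) = 0 \<or> AA i (cf x) = 1"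
    and valsB: "i \<in> {1..p} \<Longrightarrow> x \<in> carrier G \<Longrightarrow> BB i (cf x) = 0 \<or> BB i (cf x) = 1"
    and hG: "i \<in> {1..p} \<Longrightarrow> h i \<in> carrier G"
    and htr: "i \<in> {1..p} \<Longrightarrow> x \<in> carrier G \<Longrightarrow> AA i (cf x) = BB i (cf (h i \<otimes>\<^bsub>G\<^esub> x))"
    and sum1: "x \<in> carrier G \<Longrightarrow> (\<Sum>i\<in>{1..p}. BB i (cf x) - AA i (cf x)) = 1"
    and chain: "1 \<le> i \<Longrightarrow> i < p \<Longrightarrow> x \<in> carrier G \<Longrightarrow> AA (Suc i) (cf x) \<le> BB i (cf x)"
    and X1: "x \<in> carrier G \<Longrightarrow> AA 1 (cf x) = 1 \<longleftrightarrow> cf x = C0"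
    and x0: "x0 \<in> carrier G" "cf x0 = C0"
begin

lemma p_pos: "1 \<le> p"
proof (rule ccontr)
  assume "\<not> 1 \<le> p" then have "p = 0" by simp
  then show False using sum1[OF x0(1)] by simp
qed

definition d where "d i x = BB i (cf x) - (if i < p then AA (Suc i) (cf x) else 0)"
definition D where "D i = {x \<in> carrier G. d i x = 1}"
definition X1s where "X1s = {x \<in> carrier G. cf x = C0}"

primrec w :: "nat \<Rightarrow> 'a" where
  "w 0 = \<one>"
| "w (Suc i) = h (Suc i) \<otimes> w i"

definition Z where "Z i = {x \<in> carrier G. w i \<otimes> x \<in> D i}"

lemma w_closed: "i \<le> p \<Longrightarrow> w i \<in> carrier G"
proof (induction i)
  case 0 then show ?case by simp
next
  case (Suc i)
  then have "h (Suc i) \<in> carrier G" using hG by auto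
  then show ?case using Suc by simp
qed

lemma d_vals: "i \<in> {1..p} \<Longrightarrow> x \<in> carrier G \<Longrightarrow> d i x = 0 \<or> d i x = 1"
proof -
  assume i: "i \<in> {1..p}" and x: "x \<in> carrier G"
  show ?thesis
  proof (cases "i < p")
    case True
    have "Suc i \<in> {1..p}" using True by simp
    then have "AA (Suc i) (cf x) = 0 \<or> AA (Suc i) (cf x) = 1" using valsA x by blast
    moreover have "AA (Suc i) (cf x) \<le> BB i (cf x)" using chain[of i x] i True x by simp
    moreover have "BB i (cf x) = 0 \<or> BB i (cf x) = 1" using valsB[OF i x] .
    ultimately show ?thesis unfolding d_def using True by auto
  next
    case False
    then show ?thesis unfolding d_def using valsB[OF i x] by simp
  qed
qed

lemma sum_d: "x \<in> carrier G \<Longrightarrow> (\<Sum>i\<in>{1..p}. d i x) = 1 + AA 1 (cf x)"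
proof -
  assume x: "x \<in> carrier G"
  have "(\<Sum>i\<in>{1..p}. d i x) = (\<Sum>i\<in>{1..p}. BB i (cf x)) - (\<Sum>i\<in>{1..p}. if i < p then AA (Suc i) (cf x) else 0)"
    unfolding d_def by (simp add: sum_subtractf)
  also have "\<dots> = (\<Sum>i\<in>{1..p}. BB i (cf x)) - ((\<Sum>i\<in>{1..p}. AA i (cf x)) - AA 1 (cf x))"
    using sum_shift_if[OF p_pos, of "\<lambda>i. AA i (cf x)"] by simp
  also have "\<dots> = (\<Sum>i\<in>{1..p}. BB i (cf x) - AA i (cf x)) + AA 1 (cf x)"
    by (simp add: sum_subtractf)
  also have "\<dots> = 1 + AA 1 (cf x)" using sum1[OF x] by simp
  finally show ?thesis .
qed

lemma D_sub: "D i \<subseteq> carrier G" unfolding D_def by auto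

lemma D_inv: "x \<in> carrier G \<Longrightarrow> y \<in> carrier G \<Longrightarrow> cf x = cf y \<Longrightarrow> x \<in> D i \<longleftrightarrow> y \<in> D i"
  unfolding D_def d_def by simp

lemma back_lem:
  "i \<in> {1..p} \<Longrightarrow> x \<in> carrier G \<Longrightarrow> BB i (cf (w i \<otimes> x)) = 1 \<Longrightarrow>
    cf x = C0 \<and> (\<forall>j. 1 \<le> j \<longrightarrow> j < i \<longrightarrow> AA (Suc j) (cf (w j \<otimes> x)) = 1)"
proof (induction i)
  case 0 then show ?case by simp
next
  case (Suc k)
  have hk: "h (Suc k) \<in> carrier G" using hG Suc.prems(1) by blast
  have wk: "w k \<in> carrier G" using w_closed Suc.prems(1) by simp
  have wkx: "w k \<otimes> x \<in> carrier G" using wk Suc.prems(2) by simp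
  have eq: "w (Suc k) \<otimes> x = h (Suc k) \<otimes> (w k \<otimes> x)"
    using hk wk Suc.prems(2) by (simp add: m_assoc)
  have A1: "AA (Suc k) (cf (w k \<otimes> x)) = 1"
    using htr[OF Suc.prems(1) wkx] Suc.prems(3) eq by simp
  show ?case
  proof (cases k)
    case 0
    then have "w k \<otimes> x = x" using Suc.prems(2) by simp
    then have "AA 1 (cf x) = 1" using A1 0 by simp
    then show ?thesis using X1[OF Suc.prems(2)] 0 by simp
  next
    case (Suc k')
    then have k1: "k \<in> {1..p}" "1 \<le> k" "k < p" using Suc.prems(1) by auto
    have "AA (Suc k) (cf (w k \<otimes> x)) \<le> BB k (cf (w k \<otimes> x))" using chain[OF k1(2,3) wkx] .
    then have "BB k (cf (w k \<otimes> x)) = 1" using A1 valsB[OF k1(1) wkx] by auto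
    then have IH: "cf x = C0 \<and> (\<forall>j. 1 \<le> j \<longrightarrow> j < k \<longrightarrow> AA (Suc j) (cf (w j \<otimes> x)) = 1)"
      using Suc.IH k1(1) Suc.prems(2) by blast
    have "\<forall>j. 1 \<le> j \<longrightarrow> j < Suc k \<longrightarrow> AA (Suc j) (cf (w j \<otimes> x)) = 1"
    proof (intro allI impI)
      fix j assume "1 \<le> j" "j < Suc k"
      then show "AA (Suc j) (cf (w j \<otimes> x)) = 1"
        using IH A1 by (cases "j = k") auto
    qed
    then show ?thesis using IH by simp
  qed
qed

lemma BB_of_d: "i \<in> {1..p} \<Longrightarrow> x \<in> carrier G \<Longrightarrow> d i x = 1 \<Longrightarrow> BB i (cf x) = 1"
proof -
  assume i: "i \<in> {1..p}" and x: "x \<in> carrier G" and d1: "d i x = 1"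
  show ?thesis
  proof (cases "i < p")
    case True
    have "Suc i \<in> {1..p}" using True by simp
    then have "AA (Suc i) (cf x) = 0 \<or> AA (Suc i) (cf x) = 1" using valsA x by blast
    then show ?thesis using d1 valsB[OF i x] True unfolding d_def by auto
  next
    case False then show ?thesis using d1 unfolding d_def by simp
  qed
qed

lemma Z_sub: "i \<in> {1..p} \<Longrightarrow> Z i \<subseteq> X1s"
proof
  fix x assume i: "i \<in> {1..p}" and "x \<in> Z i"
  then have x: "x \<in> carrier G" and wx: "w i \<otimes> x \<in> D i" unfolding Z_def by auto
  have wxG: "w i \<otimes> x \<in> carrier G" using w_closed i x by simp
  have "BB i (cf (w i \<otimes> x)) = 1" using BB_of_d[OF i wxG] wx unfolding D_def by simp
  then show "x \<in> X1s" using back_lem[OF i x] x unfolding X1s_def by simp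
qed

lemma Z_disj: "i \<in> {1..p} \<Longrightarrow> i' \<in> {1..p} \<Longrightarrow> i < i' \<Longrightarrow> Z i \<inter> Z i' = {}"
proof (rule ccontr)
  assume i: "i \<in> {1..p}" and i': "i' \<in> {1..p}" and lt: "i < i'" and ne: "Z i \<inter> Z i' \<noteq> {}"
  then obtain x where xi: "x \<in> Z i" and xi': "x \<in> Z i'" by blast
  have x: "x \<in> carrier G" using xi unfolding Z_def by simp
  have wxG': "w i' \<otimes> x \<in> carrier G" using w_closed i' x by simp
  have "BB i' (cf (w i' \<otimes> x)) = 1" using BB_of_d[OF i' wxG'] xi' unfolding Z_def D_def by simp
  then have a1: "AA (Suc i) (cf (w i \<otimes> x)) = 1" using back_lem[OF i' x] lt i by auto
  have wxG: "w i \<otimes> x \<in> carrier G" using w_closed i x by simp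
  have "d i (w i \<otimes> x) = 1" using xi unfolding Z_def D_def by simp
  moreover have "i < p" using lt i' by simp
  ultimately show False using a1 valsB[OF i wxG] unfolding d_def by auto
qed

lemma Z_cover: "x \<in> X1s \<Longrightarrow> \<exists>i\<in>{1..p}. x \<in> Z i"
proof -
  assume xX: "x \<in> X1s"
  then have x: "x \<in> carrier G" and cx: "cf x = C0" unfolding X1s_def by auto
  have claim: "i \<le> p \<Longrightarrow> 1 \<le> i \<Longrightarrow> (\<exists>j\<in>{1..p}. x \<in> Z j) \<or> AA i (cf (w (i - 1) \<otimes> x)) = 1" for i
  proof (induction i)
    case 0 then show ?case by simp
  next
    case (Suc i)
    show ?case
    proof (cases "i = 0")
      case True
      then show ?thesis using X1[OF x] cx x by simp
    next
      case False
      then have i: "i \<in> {1..p}" "1 \<le> i" "i < p" using Suc.prems by auto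
      from Suc.IH i have "(\<exists>j\<in>{1..p}. x \<in> Z j) \<or> AA i (cf (w (i - 1) \<otimes> x)) = 1" by simp
      then show ?thesis
      proof
        assume "\<exists>j\<in>{1..p}. x \<in> Z j" then show ?thesis by simp
      next
        assume a: "AA i (cf (w (i - 1) \<otimes> x)) = 1"
        have wi1: "w (i - 1) \<in> carrier G" using w_closed i by simp
        have hi: "h i \<in> carrier G" using hG i by simp
        have wix: "w (i - 1) \<otimes> x \<in> carrier G" using wi1 x by simp
        have wi: "w i = h i \<otimes> w (i - 1)" using i by (cases i) auto
        have wiG: "w i \<otimes> x \<in> carrier G" using w_closed i x by simp
        have "BB i (cf (h i \<otimes> (w (i - 1) \<otimes> x))) = 1" using htr[OF i(1) wix] a by simp
        then have b: "BB i (cf (w i \<otimes> x)) = 1" using wi hi wi1 x by (simp add: m_assoc)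
        have si: "Suc i \<in> {1..p}" using i by simp
        show ?thesis
        proof (cases "AA (Suc i) (cf (w i \<otimes> x)) = 1")
          case True then show ?thesis by simp
        next
          case False
          then have "AA (Suc i) (cf (w i \<otimes> x)) = 0" using valsA[OF si wiG] by simp
          then have "d i (w i \<otimes> x) = 1" using b i unfolding d_def by simp
          then have "x \<in> Z i" using wiG x unfolding Z_def D_def by simp
          then show ?thesis using i by blast
        qed
      qed
    qed
  qed
  from claim[OF order_refl p_pos] show ?thesis
  proof
    assume "\<exists>j\<in>{1..p}. x \<in> Z j" then show ?thesis .
  next
    assume a: "AA p (cf (w (p - 1) \<otimes> x)) = 1"
    have pp: "p \<in> {1..p}" using p_pos by simp
    have wi1: "w (p - 1) \<in> carrier G" using w_closed by simp
    have hi: "h p \<in> carrier G" using hG pp by simp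
    have wix: "w (p - 1) \<otimes> x \<in> carrier G" using wi1 x by simp
    have wi: "w p = h p \<otimes> w (p - 1)" using p_pos by (cases p) auto
    have wiG: "w p \<otimes> x \<in> carrier G" using w_closed x by simp
    have "BB p (cf (h p \<otimes> (w (p - 1) \<otimes> x))) = 1" using htr[OF pp wix] a by simp
    then have b: "BB p (cf (w p \<otimes> x)) = 1" using wi hi wi1 x by (simp add: m_assoc)
    then have "d p (w p \<otimes> x) = 1" unfolding d_def by simp
    then have "x \<in> Z p" using wiG x unfolding Z_def D_def by simp
    then show ?thesis using pp by blast
  qed
qed

lemma Z_img: "i \<le> p \<Longrightarrow> (\<otimes>) (w i) ` Z i = D i"
proof
  assume i: "i \<le> p"
  show "(\<otimes>) (w i) ` Z i \<subseteq> D i" unfolding Z_def by auto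
  show "D i \<subseteq> (\<otimes>) (w i) ` Z i"
  proof
    fix y assume y: "y \<in> D i"
    have yG: "y \<in> carrier G" using y D_sub by blast
    have wi: "w i \<in> carrier G" using w_closed i by simp
    have e: "w i \<otimes> (inv (w i) \<otimes> y) = y" using wi yG by (simp add: m_assoc[symmetric])
    have "inv (w i) \<otimes> y \<in> Z i" unfolding Z_def using e y wi yG by simp
    then show "y \<in> (\<otimes>) (w i) ` Z i" using e by (metis image_eqI)
  qed
qed

end



lemma enum_union:
  assumes "length L \<le> r"
  shows "(\<Union>n\<in>{1..r}. if n \<le> length L then Q (L ! (n - 1)) else {}) = (\<Union>f\<in>set L. Q f)"
proof
  show "(\<Union>n\<in>{1..r}. if n \<le> length L then Q (L ! (n - 1)) else {}) \<subseteq> (\<Union>f\<in>set L. Q f)"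
  proof
    fix z assume "z \<in> (\<Union>n\<in>{1..r}. if n \<le> length L then Q (L ! (n - 1)) else {})"
    then obtain n where n: "n \<in> {1..r}" "n \<le> length L" "z \<in> Q (L ! (n - 1))"
      by (auto split: if_splits)
    then have "L ! (n - 1) \<in> set L" by (intro nth_mem) auto
    then show "z \<in> (\<Union>f\<in>set L. Q f)" using n by blast
  qed
next
  show "(\<Union>f\<in>set L. Q f) \<subseteq> (\<Union>n\<in>{1..r}. if n \<le> length L then Q (L ! (n - 1)) else {})"
  proof
    fix z assume "z \<in> (\<Union>f\<in>set L. Q f)"
    then obtain f where f: "f \<in> set L" "z \<in> Q f" by blast
    then obtain i where i: "i < length L" "L ! i = f" by (auto simp: in_set_conv_nth)
    have "Suc i \<in> {1..r}" "Suc i \<le> length L" using i assms by auto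
    moreover have "L ! (Suc i - 1) = f" using i by simp
    ultimately show "z \<in> (\<Union>n\<in>{1..r}. if n \<le> length L then Q (L ! (n - 1)) else {})"
      using f(2) by (intro UN_I[of "Suc i"]) auto
  qed
qed

lemma enum_pair:
  assumes "distinct L" "i \<in> {1..r}" "i' \<in> {1..r}" "i \<noteq> i'" "i \<le> length L" "i' \<le> length L"
  shows "L ! (i - 1) \<noteq> L ! (i' - 1)" "L ! (i - 1) \<in> set L" "L ! (i' - 1) \<in> set L"
proof -
  have "i - 1 < length L" "i' - 1 < length L" "i - 1 \<noteq> i' - 1" using assms by auto
  then show "L ! (i - 1) \<noteq> L ! (i' - 1)" "L ! (i - 1) \<in> set L" "L ! (i' - 1) \<in> set L"
    using assms(1) nth_eq_iff_index_eq by auto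
qed

lemma cp_from_families:
  fixes G :: "('a, 'b) monoid_scheme" and FA FB :: "nat set"
    and PA PB :: "nat \<Rightarrow> 'a set" and ta tb :: "nat \<Rightarrow> 'a"
  assumes grp: "group G"
    and fA: "finite FA" "card FA \<le> r" and fB: "finite FB" "card FB \<le> s"
    and cA: "\<forall>f\<in>FA. PA f \<subseteq> carrier G \<and> ta f \<in> carrier G"
    and cB: "\<forall>f\<in>FB. PB f \<subseteq> carrier G \<and> tb f \<in> carrier G"
    and dA: "\<forall>f\<in>FA. \<forall>f'\<in>FA. f \<noteq> f' \<longrightarrow> PA f \<inter> PA f' = {}"
    and dB: "\<forall>f\<in>FB. \<forall>f'\<in>FB. f \<noteq> f' \<longrightarrow> PB f \<inter> PB f' = {}"
    and dAB: "\<forall>f\<in>FA. \<forall>f'\<in>FB. PA f \<inter> PB f' = {}"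
    and un: "(\<Union>f\<in>FA. PA f) \<union> (\<Union>f\<in>FB. PB f) = carrier G"
    and iA: "\<forall>f\<in>FA. \<forall>f'\<in>FA. f \<noteq> f' \<longrightarrow>
        ((\<otimes>\<^bsub>G\<^esub>) (ta f) ` PA f) \<inter> ((\<otimes>\<^bsub>G\<^esub>) (ta f') ` PA f') = {}"
    and uA: "(\<Union>f\<in>FA. (\<otimes>\<^bsub>G\<^esub>) (ta f) ` PA f) = carrier G"
    and iB: "\<forall>f\<in>FB. \<forall>f'\<in>FB. f \<noteq> f' \<longrightarrow>
        ((\<otimes>\<^bsub>G\<^esub>) (tb f) ` PB f) \<inter> ((\<otimes>\<^bsub>G\<^esub>) (tb f') ` PB f') = {}"
    and uB: "(\<Union>f\<in>FB. (\<otimes>\<^bsub>G\<^esub>) (tb f) ` PB f) = carrier G"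
  shows "complete_paradoxical G r s"
proof -
  define LA where "LA = sorted_list_of_set FA"
  define LB where "LB = sorted_list_of_set FB"
  have LA: "set LA = FA" "distinct LA" "length LA \<le> r" using fA unfolding LA_def by auto
  have LB: "set LB = FB" "distinct LB" "length LB \<le> s" using fB unfolding LB_def by auto
  have one: "\<one>\<^bsub>G\<^esub> \<in> carrier G" using grp by (simp add: group.is_monoid monoid.one_closed)
  define A where "A n = (if n \<le> length LA then PA (LA ! (n - 1)) else {})" for n
  define a where "a n = (if n \<le> length LA then ta (LA ! (n - 1)) else \<one>\<^bsub>G\<^esub>)" for n
  define B where "B n = (if n \<le> length LB then PB (LB ! (n - 1)) else {})" for n
  define b where "b n = (if n \<le> length LB then tb (LB ! (n - 1)) else \<one>\<^bsub>G\<^esub>)" for n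
  have imA: "(\<otimes>\<^bsub>G\<^esub>) (a n) ` A n = (if n \<le> length LA then (\<otimes>\<^bsub>G\<^esub>) (ta (LA ! (n - 1))) ` PA (LA ! (n - 1)) else {})" for n
    unfolding A_def a_def by simp
  have imB: "(\<otimes>\<^bsub>G\<^esub>) (b n) ` B n = (if n \<le> length LB then (\<otimes>\<^bsub>G\<^esub>) (tb (LB ! (n - 1))) ` PB (LB ! (n - 1)) else {})" for n
    unfolding B_def b_def by simp
  have memA: "LA ! (n - 1) \<in> FA" if "n \<in> {1..r}" "n \<le> length LA" for n
  proof -
    have "n - 1 < length LA" using that by auto
    then show ?thesis using LA(1) nth_mem[of "n - 1" LA] by simp
  qed
  have memB: "LB ! (n - 1) \<in> FB" if "n \<in> {1..s}" "n \<le> length LB" for n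
  proof -
    have "n - 1 < length LB" using that by auto
    then show ?thesis using LB(1) nth_mem[of "n - 1" LB] by simp
  qed
  have c1: "\<forall>i\<in>{1..r}. A i \<subseteq> carrier G \<and> a i \<in> carrier G"
    using cA memA one unfolding A_def a_def by auto
  have c2: "\<forall>j\<in>{1..s}. B j \<subseteq> carrier G \<and> b j \<in> carrier G"
    using cB memB one unfolding B_def b_def by auto
  have c3: "\<forall>i\<in>{1..r}. \<forall>i'\<in>{1..r}. i \<noteq> i' \<longrightarrow> A i \<inter> A i' = {}"
  proof (intro ballI impI)
    fix i i' assume ii: "i \<in> {1..r}" "i' \<in> {1..r}" "i \<noteq> i'"
    show "A i \<inter> A i' = {}"
    proof (cases "i \<le> length LA \<and> i' \<le> length LA")
      case True
      then show ?thesis unfolding A_def using dA LA(1) enum_pair[OF LA(2) ii] True by auto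
    next
      case False then show ?thesis unfolding A_def by auto
    qed
  qed
  have c4: "\<forall>j\<in>{1..s}. \<forall>j'\<in>{1..s}. j \<noteq> j' \<longrightarrow> B j \<inter> B j' = {}"
  proof (intro ballI impI)
    fix i i' assume ii: "i \<in> {1..s}" "i' \<in> {1..s}" "i \<noteq> i'"
    show "B i \<inter> B i' = {}"
    proof (cases "i \<le> length LB \<and> i' \<le> length LB")
      case True
      then show ?thesis unfolding B_def using dB LB(1) enum_pair[OF LB(2) ii] True by auto
    next
      case False then show ?thesis unfolding B_def by auto
    qed
  qed
  have c5: "\<forall>i\<in>{1..r}. \<forall>j\<in>{1..s}. A i \<inter> B j = {}"
    using dAB memA memB unfolding A_def B_def by auto
  have c6: "(\<Union>i\<in>{1..r}. A i) \<union> (\<Union>j\<in>{1..s}. B j) = carrier G"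
    using un enum_union[OF LA(3), of PA] enum_union[OF LB(3), of PB] LA(1) LB(1)
    unfolding A_def B_def by simp
  have c7: "\<forall>i\<in>{1..r}. \<forall>i'\<in>{1..r}. i \<noteq> i' \<longrightarrow>
          ((\<otimes>\<^bsub>G\<^esub>) (a i) ` A i) \<inter> ((\<otimes>\<^bsub>G\<^esub>) (a i') ` A i') = {}"
  proof (intro ballI impI)
    fix i i' assume ii: "i \<in> {1..r}" "i' \<in> {1..r}" "i \<noteq> i'"
    show "((\<otimes>\<^bsub>G\<^esub>) (a i) ` A i) \<inter> ((\<otimes>\<^bsub>G\<^esub>) (a i') ` A i') = {}"
    proof (cases "i \<le> length LA \<and> i' \<le> length LA")
      case True
      then show ?thesis unfolding imA using iA LA(1) enum_pair[OF LA(2) ii] True by auto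
    next
      case False then show ?thesis unfolding imA by auto
    qed
  qed
  have c8: "(\<Union>i\<in>{1..r}. (\<otimes>\<^bsub>G\<^esub>) (a i) ` A i) = carrier G"
    unfolding imA using uA enum_union[OF LA(3), of "\<lambda>f. (\<otimes>\<^bsub>G\<^esub>) (ta f) ` PA f"] LA(1) by simp
  have c9: "\<forall>j\<in>{1..s}. \<forall>j'\<in>{1..s}. j \<noteq> j' \<longrightarrow>
          ((\<otimes>\<^bsub>G\<^esub>) (b j) ` B j) \<inter> ((\<otimes>\<^bsub>G\<^esub>) (b j') ` B j') = {}"
  proof (intro ballI impI)
    fix i i' assume ii: "i \<in> {1..s}" "i' \<in> {1..s}" "i \<noteq> i'"
    show "((\<otimes>\<^bsub>G\<^esub>) (b i) ` B i) \<inter> ((\<otimes>\<^bsub>G\<^esub>) (b i') ` B i') = {}"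
    proof (cases "i \<le> length LB \<and> i' \<le> length LB")
      case True
      then show ?thesis unfolding imB using iB LB(1) enum_pair[OF LB(2) ii] True by auto
    next
      case False then show ?thesis unfolding imB by auto
    qed
  qed
  have c10: "(\<Union>j\<in>{1..s}. (\<otimes>\<^bsub>G\<^esub>) (b j) ` B j) = carrier G"
    unfolding imB using uB enum_union[OF LB(3), of "\<lambda>f. (\<otimes>\<^bsub>G\<^esub>) (tb f) ` PB f"] LB(1) by simp
  show ?thesis unfolding complete_paradoxical_def
    apply (rule exI[of _ A], rule exI[of _ B], rule exI[of _ a], rule exI[of _ b])
    by (intro conjI c1 c2 c3 c4 c5 c6 c7 c8 c9 c10)
qed


context cfg
begin

lemma one_img: "S \<subseteq> carrier G \<Longrightarrow> (\<otimes>) \<one> ` S = S"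
proof
  assume S: "S \<subseteq> carrier G"
  show "(\<otimes>) \<one> ` S \<subseteq> S" using S by auto
  show "S \<subseteq> (\<otimes>) \<one> ` S"
  proof
    fix x assume "x \<in> S"
    then have "\<one> \<otimes> x = x" "x \<in> S" using S by auto
    then show "x \<in> (\<otimes>) \<one> ` S" by (metis image_eqI)
  qed
qed

theorem cp32: "complete_paradoxical G 3 2"
proof -
  have x0X: "x0 \<in> X1s" using x0 unfolding X1s_def by simp
  have A10: "AA 1 (cf x0) = 1" using X1[OF x0(1)] x0(2) by simp
  have s2: "(\<Sum>i\<in>{1..p}. d i x0) = 2" using sum_d[OF x0(1)] A10 by simp
  obtain i2 where i2: "i2 \<in> {1..p}" "d i2 x0 = 1"
  proof (rule ccontr)
    assume nx: "\<not> thesis"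
    have "\<forall>i\<in>{1..p}. d i x0 = 0"
    proof
      fix i assume i: "i \<in> {1..p}"
      have "d i x0 \<noteq> 1" using nx that i by blast
      then show "d i x0 = 0" using d_vals[OF i x0(1)] by simp
    qed
    then have "(\<Sum>i\<in>{1..p}. d i x0) = 0" by simp
    then show False using s2 by simp
  qed
  have x0D: "x0 \<in> D i2" using i2 x0 unfolding D_def by simp
  have X1D: "X1s \<subseteq> D i2"
  proof
    fix x assume "x \<in> X1s"
    then have x: "x \<in> carrier G" "cf x = cf x0" using x0 unfolding X1s_def by auto
    then show "x \<in> D i2" using D_inv[OF x(1) x0(1) x(2)] x0D by simp
  qed
  define S' where "S' x = (\<Sum>i\<in>{1..p}-{i2}. d i x)" for x
  have S'eq: "S' x = 1 + AA 1 (cf x) - d i2 x" if x: "x \<in> carrier G" for x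
  proof -
    have "(\<Sum>i\<in>{1..p}. d i x) = d i2 x + (\<Sum>i\<in>{1..p}-{i2}. d i x)"
      using i2(1) by (simp add: sum.remove)
    then show ?thesis using sum_d[OF x] unfolding S'_def by simp
  qed
  have dnn: "0 \<le> d i x" if "i \<in> {1..p}" "x \<in> carrier G" for i x
    using d_vals[OF that] by auto
  have S'X1: "S' x = 1" if x: "x \<in> X1s" for x
  proof -
    have xG: "x \<in> carrier G" and cx: "cf x = C0" using x unfolding X1s_def by auto
    have "AA 1 (cf x) = 1" using X1[OF xG] cx by simp
    moreover have "d i2 x = 1" using X1D x unfolding D_def by auto
    ultimately show ?thesis using S'eq[OF xG] by simp
  qed
  have S'out: "S' x = 1 - d i2 x" if x: "x \<in> carrier G" "x \<notin> X1s" for x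
  proof -
    have "cf x \<noteq> C0" using x unfolding X1s_def by auto
    then have "AA 1 (cf x) \<noteq> 1" using X1[OF x(1)] by simp
    moreover have "1 \<in> {1..p}" using p_pos by simp
    ultimately have "AA 1 (cf x) = 0" using valsA[of 1 x] x(1) by auto
    then show ?thesis using S'eq[OF x(1)] by simp
  qed
  have S'le: "S' x \<le> 1" if x: "x \<in> carrier G" for x
  proof (cases "x \<in> X1s")
    case True then show ?thesis using S'X1 by simp
  next
    case False then show ?thesis using S'out[OF x False] dnn[OF i2(1) x] by simp
  qed
  define K where "K = D i2 - X1s"
  have KG: "K \<subseteq> carrier G" unfolding K_def using D_sub by blast
  have K0: "S' x = 0" if x: "x \<in> K" for x
  proof -
    have xG: "x \<in> carrier G" "x \<notin> X1s" "d i2 x = 1" using x unfolding K_def D_def by auto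
    then show ?thesis using S'out[OF xG(1,2)] by simp
  qed
  have fin': "finite ({1..p} - {i2})" by simp
  have Dsum: "1 \<le> S' x" if i: "i \<in> {1..p} - {i2}" and x: "x \<in> D i" for i x
  proof -
    have xG: "x \<in> carrier G" and dx: "d i x = 1" using x unfolding D_def by auto
    have "d i x \<le> S' x" unfolding S'_def
      by (rule member_le_sum[OF i _ fin']) (use dnn xG in auto)
    then show ?thesis using dx by simp
  qed
  have Ddisj: "D i \<inter> D i' = {}" if i: "i \<in> {1..p} - {i2}" "i' \<in> {1..p} - {i2}" "i \<noteq> i'" for i i'
  proof (rule ccontr)
    assume "D i \<inter> D i' \<noteq> {}"
    then obtain x where x: "x \<in> D i" "x \<in> D i'" by blast
    have xG: "x \<in> carrier G" and dx: "d i x = 1" "d i' x = 1" using x unfolding D_def by auto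
    have "(\<Sum>j\<in>{i, i'}. d j x) \<le> S' x" unfolding S'_def
      by (rule sum_mono2[OF fin']) (use i dnn xG in auto)
    then have "2 \<le> S' x" using dx i(3) by simp
    then show False using S'le[OF xG] by simp
  qed
  have KD: "K \<inter> D i = {}" if i: "i \<in> {1..p} - {i2}" for i
    using K0 Dsum[OF i] by fastforce
  have cover: "x \<in> K \<or> (\<exists>i\<in>{1..p} - {i2}. x \<in> D i)" if x: "x \<in> carrier G" for x
  proof (cases "x \<in> K")
    case True then show ?thesis by simp
  next
    case False
    have S1: "S' x = 1"
    proof (cases "x \<in> X1s")
      case True then show ?thesis using S'X1 by simp
    next
      case nX: False
      then have "x \<notin> D i2" using False unfolding K_def by simp
      then have "d i2 x \<noteq> 1" using x unfolding D_def by simp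
      then have "d i2 x = 0" using d_vals[OF i2(1) x] by simp
      then show ?thesis using S'out[OF x nX] by simp
    qed
    have "\<exists>i\<in>{1..p} - {i2}. d i x \<noteq> 0"
    proof (rule ccontr)
      assume "\<not> (\<exists>i\<in>{1..p} - {i2}. d i x \<noteq> 0)"
      then have "S' x = 0" unfolding S'_def by simp
      then show False using S1 by simp
    qed
    then obtain i where i: "i \<in> {1..p} - {i2}" "d i x \<noteq> 0" by blast
    then have "d i x = 1" using d_vals[of i x] x by auto
    then show ?thesis using i x unfolding D_def by blast
  qed
  define Fam where "Fam = {i \<in> {1..p} - {i2}. D i \<noteq> {}} \<union> (if K = {} then {} else {0})"
  define PA where "PA f = (if f = 0 then K else Z f)" for f
  define ta where "ta f = (if f = 0 then \<one> else w f)" for f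
  define IA where "IA f = (if f = 0 then K else D f)" for f
  have Fam_cases: "f \<in> Fam \<Longrightarrow> (f = 0 \<and> K \<noteq> {}) \<or> (f \<in> {1..p} - {i2} \<and> D f \<noteq> {})" for f
    unfolding Fam_def by (auto split: if_splits)
  have finFam: "finite Fam"
  proof (rule finite_subset)
    show "Fam \<subseteq> {0..p}" unfolding Fam_def by auto
  qed simp
  have imgA: "(\<otimes>) (ta f) ` PA f = IA f" if f: "f \<in> Fam" for f
  proof (cases "f = 0")
    case True then show ?thesis unfolding ta_def PA_def IA_def using one_img[OF KG] by simp
  next
    case False
    then have "f \<le> p" using Fam_cases[OF f] by auto
    then show ?thesis unfolding ta_def PA_def IA_def using Z_img False by simp
  qed
  have IAne: "IA f \<noteq> {}" if f: "f \<in> Fam" for f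
    using Fam_cases[OF f] unfolding IA_def by auto
  have IAG: "IA f \<subseteq> carrier G" if f: "f \<in> Fam" for f
    using KG D_sub unfolding IA_def by auto
  have IAdisj: "IA f \<inter> IA f' = {}" if f: "f \<in> Fam" "f' \<in> Fam" "f \<noteq> f'" for f f'
  proof (cases "f = 0")
    case True
    then have "f' \<in> {1..p} - {i2}" using Fam_cases[OF f(2)] f(3) by auto
    then show ?thesis unfolding IA_def using True f(3) KD by auto
  next
    case False
    then have fi: "f \<in> {1..p} - {i2}" using Fam_cases[OF f(1)] by auto
    show ?thesis
    proof (cases "f' = 0")
      case True then show ?thesis unfolding IA_def using False KD[OF fi] by auto
    next
      case False
      then have "f' \<in> {1..p} - {i2}" using Fam_cases[OF f(2)] by auto
      then show ?thesis unfolding IA_def using False \<open>f \<noteq> 0\<close> Ddisj[OF fi _ f(3)] by auto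
    qed
  qed
  have IAinv: "y \<in> IA f" if f: "f \<in> Fam" and y: "y \<in> carrier G" and x: "x \<in> IA f" "cf x = cf y" for f x y
  proof -
    have xG: "x \<in> carrier G" using x IAG[OF f] by blast
    show ?thesis
    proof (cases "f = 0")
      case True
      then have "x \<in> D i2" "x \<notin> X1s" using x unfolding IA_def K_def by auto
      then have "y \<in> D i2" "y \<notin> X1s" using D_inv[OF xG y x(2)] x(2) xG y unfolding X1s_def by auto
      then show ?thesis using True unfolding IA_def K_def by simp
    next
      case False
      then show ?thesis using x D_inv[OF xG y x(2)] unfolding IA_def by simp
    qed
  qed
  have cardFam: "card Fam \<le> 3"
  proof -
    define \<iota> where "\<iota> f = cf (SOME y. y \<in> IA f)" for f
    have sel: "(SOME y. y \<in> IA f) \<in> IA f" if "f \<in> Fam" for f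
      using IAne[OF that] by (simp add: some_in_eq)
    have "inj_on \<iota> Fam"
    proof (rule inj_onI)
      fix f f' assume f: "f \<in> Fam" "f' \<in> Fam" and e: "\<iota> f = \<iota> f'"
      let ?y = "SOME y. y \<in> IA f" and ?y' = "SOME y. y \<in> IA f'"
      have y: "?y \<in> IA f" "?y' \<in> IA f'" using sel f by auto
      have yG: "?y \<in> carrier G" using y(1) IAG[OF f(1)] by blast
      have "?y \<in> IA f'" using IAinv[OF f(2) yG y(2)] e unfolding \<iota>_def by simp
      then show "f = f'" using y(1) IAdisj[OF f] by blast
    qed
    moreover have "\<iota> ` Fam \<subseteq> Cn"
    proof
      fix c assume "c \<in> \<iota> ` Fam"
      then obtain f where f: "f \<in> Fam" "c = \<iota> f" by blast
      have "(SOME y. y \<in> IA f) \<in> carrier G" using sel[OF f(1)] IAG[OF f(1)] by blast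
      then show "c \<in> Cn" using f cf_in unfolding \<iota>_def by simp
    qed
    ultimately have "card Fam \<le> card Cn" using card_inj_on_le finCn by blast
    then show ?thesis using cardCn by simp
  qed
  define PB where "PB f = (if f = 1 then Z i2 else carrier G - D i2)" for f :: nat
  define tb where "tb f = (if f = 1 then w i2 else \<one>)" for f :: nat
  have i2p: "i2 \<le> p" using i2 by simp
  have Zi2: "Z i2 \<subseteq> X1s" using Z_sub[OF i2(1)] .
  have X1G: "X1s \<subseteq> carrier G" unfolding X1s_def by auto
  have ZG: "Z i \<subseteq> carrier G" for i unfolding Z_def by auto
  have KX: "K \<inter> X1s = {}" unfolding K_def by auto
  show ?thesis
  proof (rule cp_from_families[where FA = Fam and FB = "{1, 2}" and PA = PA and PB = PB and ta = ta and tb = tb])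
    show "group G" by (rule is_group)
    show "finite Fam" by (rule finFam)
    show "card Fam \<le> 3" by (rule cardFam)
    show "finite {1, 2::nat}" by simp
    show "card {1, 2::nat} \<le> 2" by simp
    show "\<forall>f\<in>Fam. PA f \<subseteq> carrier G \<and> ta f \<in> carrier G"
    proof
      fix f assume f: "f \<in> Fam"
      show "PA f \<subseteq> carrier G \<and> ta f \<in> carrier G"
      proof (cases "f = 0")
        case True then show ?thesis unfolding PA_def ta_def using KG by simp
      next
        case False
        then have "f \<le> p" using Fam_cases[OF f] by auto
        then show ?thesis unfolding PA_def ta_def using False ZG w_closed by simp
      qed
    qed
    show "\<forall>f\<in>{1, 2}. PB f \<subseteq> carrier G \<and> tb f \<in> carrier G"
      unfolding PB_def tb_def using ZG w_closed[OF i2p] by auto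
    show "\<forall>f\<in>Fam. \<forall>f'\<in>Fam. f \<noteq> f' \<longrightarrow> PA f \<inter> PA f' = {}"
    proof (intro ballI impI)
      fix f f' assume f: "f \<in> Fam" "f' \<in> Fam" "f \<noteq> f'"
      show "PA f \<inter> PA f' = {}"
      proof (cases "f = 0")
        case True
        then have "f' \<in> {1..p} - {i2}" using Fam_cases[OF f(2)] f(3) by auto
        then show ?thesis unfolding PA_def using True f(3) KX Z_sub by fastforce
      next
        case False
        then have fi: "f \<in> {1..p} - {i2}" using Fam_cases[OF f(1)] by auto
        show ?thesis
        proof (cases "f' = 0")
          case True
          then show ?thesis unfolding PA_def using False KX Z_sub fi by fastforce
        next
          case False
          then have fi': "f' \<in> {1..p} - {i2}" using Fam_cases[OF f(2)] by auto
          have "Z f \<inter> Z f' = {}"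
          proof (cases "f < f'")
            case True then show ?thesis using Z_disj fi fi' by auto
          next
            case False then have "f' < f" using f(3) by simp
            then show ?thesis using Z_disj[of f' f] fi fi' by auto
          qed
          then show ?thesis unfolding PA_def using False \<open>f \<noteq> 0\<close> by simp
        qed
      qed
    qed
    show "\<forall>f\<in>{1, 2}. \<forall>f'\<in>{1, 2}. f \<noteq> f' \<longrightarrow> PB f \<inter> PB f' = {}"
      unfolding PB_def using Zi2 X1D by auto
    have Zi2d: "Z f \<inter> Z i2 = {}" if "f \<in> {1..p} - {i2}" for f
    proof (cases "f < i2")
      case True then show ?thesis using Z_disj that i2(1) by auto
    next
      case False then have "i2 < f" using that by auto
      then show ?thesis using Z_disj[of i2 f] that i2(1) by auto
    qed
    show "\<forall>f\<in>Fam. \<forall>f'\<in>{1, 2}. PA f \<inter> PB f' = {}"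
    proof (intro ballI)
      fix f f' assume f: "f \<in> Fam" and f': "f' \<in> {1, 2::nat}"
      show "PA f \<inter> PB f' = {}"
      proof (cases "f = 0")
        case True
        then show ?thesis unfolding PA_def PB_def using KX Zi2 K_def by auto
      next
        case False
        then have fi: "f \<in> {1..p} - {i2}" using Fam_cases[OF f] by auto
        then have "Z f \<subseteq> X1s" using Z_sub by auto
        then show ?thesis unfolding PA_def PB_def using False Zi2d[OF fi] X1D by auto
      qed
    qed
    show "(\<Union>f\<in>Fam. PA f) \<union> (\<Union>f\<in>{1, 2}. PB f) = carrier G"
    proof
      show "(\<Union>f\<in>Fam. PA f) \<union> (\<Union>f\<in>{1, 2}. PB f) \<subseteq> carrier G"
        unfolding PA_def PB_def using KG ZG by auto
      show "carrier G \<subseteq> (\<Union>f\<in>Fam. PA f) \<union> (\<Union>f\<in>{1, 2}. PB f)"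
      proof
        fix x assume x: "x \<in> carrier G"
        show "x \<in> (\<Union>f\<in>Fam. PA f) \<union> (\<Union>f\<in>{1, 2}. PB f)"
        proof (cases "x \<in> X1s")
          case True
          then obtain i where i: "i \<in> {1..p}" "x \<in> Z i" using Z_cover by blast
          show ?thesis
          proof (cases "i = i2")
            case True then show ?thesis using i unfolding PB_def by auto
          next
            case False
            have "w i \<otimes> x \<in> D i" using i unfolding Z_def by simp
            then have "i \<in> Fam" using i False unfolding Fam_def by auto
            moreover have "i \<noteq> 0" using i by simp
            ultimately show ?thesis using i unfolding PA_def by auto
          qed
        next
          case False
          show ?thesis
          proof (cases "x \<in> D i2")
            case True
            then have "x \<in> K" using False unfolding K_def by simp
            then have "0 \<in> Fam" unfolding Fam_def by auto
            then show ?thesis using \<open>x \<in> K\<close> unfolding PA_def by auto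
          next
            case False then show ?thesis using x unfolding PB_def by auto
          qed
        qed
      qed
    qed
    show "\<forall>f\<in>Fam. \<forall>f'\<in>Fam. f \<noteq> f' \<longrightarrow> ((\<otimes>) (ta f) ` PA f) \<inter> ((\<otimes>) (ta f') ` PA f') = {}"
      using imgA IAdisj by simp
    show "(\<Union>f\<in>Fam. (\<otimes>) (ta f) ` PA f) = carrier G"
    proof -
      have "(\<Union>f\<in>Fam. (\<otimes>) (ta f) ` PA f) = (\<Union>f\<in>Fam. IA f)" using imgA by simp
      also have "\<dots> = carrier G"
      proof
        show "(\<Union>f\<in>Fam. IA f) \<subseteq> carrier G" using IAG by blast
        show "carrier G \<subseteq> (\<Union>f\<in>Fam. IA f)"
        proof
          fix x assume x: "x \<in> carrier G"
          from cover[OF x] show "x \<in> (\<Union>f\<in>Fam. IA f)"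
          proof
            assume xK: "x \<in> K"
            then have "0 \<in> Fam" unfolding Fam_def by auto
            then show ?thesis using xK unfolding IA_def by auto
          next
            assume "\<exists>i\<in>{1..p} - {i2}. x \<in> D i"
            then obtain i where i: "i \<in> {1..p} - {i2}" "x \<in> D i" by blast
            then have "i \<in> Fam" "i \<noteq> 0" unfolding Fam_def by auto
            then show ?thesis using i unfolding IA_def by auto
          qed
        qed
      qed
      finally show ?thesis .
    qed
    have imB1: "(\<otimes>) (tb 1) ` PB 1 = D i2" unfolding tb_def PB_def using Z_img[OF i2p] by simp
    have imB2: "(\<otimes>) (tb 2) ` PB 2 = carrier G - D i2" unfolding tb_def PB_def
      using one_img[of "carrier G - D i2"] by auto
    show "\<forall>f\<in>{1, 2}. \<forall>f'\<in>{1, 2}. f \<noteq> f' \<longrightarrow> ((\<otimes>) (tb f) ` PB f) \<inter> ((\<otimes>) (tb f') ` PB f') = {}"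
      using imB1 imB2 by auto
    show "(\<Union>f\<in>{1, 2}. (\<otimes>) (tb f) ` PB f) = carrier G"
      using imB1 imB2 D_sub[of i2] by auto
  qed
qed

end



context group
begin

lemma main_aux:
  fixes g :: "'a list" and E :: "nat \<Rightarrow> 'a set" and m :: nat
    and p :: nat and A B :: "nat \<Rightarrow> nat list \<Rightarrow> int" and \<pi> :: "nat \<Rightarrow> nat"
  assumes g_in: "set g \<subseteq> carrier G"
    and part: "is_partition G E m"
    and subsys: "\<forall>t\<in>{1..p}. is_Eq_equation G g E m (A t) (B t)"
    and sum_one: "\<forall>C\<in>Con G g E m. (\<Sum>t\<in>{1..p}. B t C - A t C) = 1"
    and perm: "\<pi> permutes {1..p}"
    and nonneg: "\<forall>i\<in>{1..p-1}. \<forall>C\<in>Con G g E m. B (\<pi> i) C - A (\<pi> (i + 1)) C \<ge> 0"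
    and ell: "card (Con G g E m) = 3"
    and one_entry: "card {C \<in> Con G g E m. A (\<pi> 1) C = 1} = 1"
  shows "complete_paradoxical G 3 2"
proof -
  define n where "n = length g"
  define gg where "gg i = (if i = 0 then \<one> else g ! (i - 1))" for i
  have ggG: "gg i \<in> carrier G" if "i \<le> n" for i
  proof (cases "i = 0")
    case True then show ?thesis unfolding gg_def by simp
  next
    case False
    then have "i - 1 < length g" using that unfolding n_def by simp
    then have "g ! (i - 1) \<in> set g" by (rule nth_mem)
    then show ?thesis unfolding gg_def using False g_in by auto
  qed
  have P1: "\<forall>i\<in>{1..m}. E i \<noteq> {} \<and> E i \<subseteq> carrier G"
    and P2: "\<forall>i\<in>{1..m}. \<forall>j\<in>{1..m}. i \<noteq> j \<longrightarrow> E i \<inter> E j = {}"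
    and P3: "(\<Union>i\<in>{1..m}. E i) = carrier G" using part unfolding is_partition_def by auto
  define lab where "lab y = (THE c. c \<in> {1..m} \<and> y \<in> E c)" for y
  have lab: "lab y \<in> {1..m} \<and> y \<in> E (lab y)" if y: "y \<in> carrier G" for y
  proof -
    obtain c where c: "c \<in> {1..m}" "y \<in> E c" using P3 y by blast
    have "c' = c" if "c' \<in> {1..m} \<and> y \<in> E c'" for c'
      using P2 c that by blast
    then have "\<exists>!c. c \<in> {1..m} \<and> y \<in> E c" using c by blast
    then show ?thesis unfolding lab_def by (rule theI')
  qed
  have lab_iff: "y \<in> E c \<longleftrightarrow> lab y = c" if y: "y \<in> carrier G" and c: "c \<in> {1..m}" for y c
  proof
    assume yc: "y \<in> E c"
    show "lab y = c"
    proof (rule ccontr)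
      assume "lab y \<noteq> c"
      then have "E (lab y) \<inter> E c = {}" using P2 lab[OF y] c by blast
      then show False using yc lab[OF y] by blast
    qed
  next
    assume "lab y = c" then show "y \<in> E c" using lab[OF y] by simp
  qed
  define cf where "cf x = map (\<lambda>i. lab (gg i \<otimes> x)) [0..<Suc n]" for x
  have cf_len: "length (cf x) = Suc n" for x unfolding cf_def by simp
  have cf_nth: "cf x ! j = lab (gg j \<otimes> x)" if "j \<le> n" for x j
    unfolding cf_def using that by (simp del: upt_Suc)
  have cf_in: "cf x \<in> Con G g E m" if x: "x \<in> carrier G" for x
  proof -
    have "\<forall>i<length (cf x). cf x ! i \<in> {1..m}"
    proof (intro allI impI)
      fix i assume "i < length (cf x)"
      then have i: "i \<le> n" using cf_len by (simp add: less_Suc_eq_le)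
      then have "gg i \<otimes> x \<in> carrier G" using ggG x by simp
      then show "cf x ! i \<in> {1..m}" using cf_nth[OF i] lab by simp
    qed
    moreover have "x \<in> E (cf x ! 0)"
    proof -
      have "cf x ! 0 = lab x" using cf_nth[of 0 x] x unfolding gg_def by simp
      then show ?thesis using lab[OF x] by simp
    qed
    moreover have "\<forall>i\<in>{1..length g}. g ! (i - 1) \<otimes> x \<in> E (cf x ! i)"
    proof
      fix i assume i: "i \<in> {1..length g}"
      then have i': "i \<le> n" "i \<noteq> 0" unfolding n_def by auto
      then have gi: "gg i = g ! (i - 1)" unfolding gg_def by simp
      have "gg i \<otimes> x \<in> carrier G" using ggG[OF i'(1)] x by simp
      then show "g ! (i - 1) \<otimes> x \<in> E (cf x ! i)" using cf_nth[OF i'(1)] lab gi by simp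
    qed
    ultimately show ?thesis unfolding Con_def using cf_len x n_def by auto
  qed
  have cf_surj: "\<exists>x\<in>carrier G. cf x = C" if C: "C \<in> Con G g E m" for C
  proof -
    have len: "length C = Suc n" and ent: "\<forall>i<length C. C ! i \<in> {1..m}"
      using C unfolding Con_def n_def by auto
    obtain x where x: "x \<in> carrier G" "x \<in> E (C ! 0)"
      and xi: "\<forall>i\<in>{1..length g}. g ! (i - 1) \<otimes> x \<in> E (C ! i)"
      using C unfolding Con_def by blast
    have "cf x = C"
    proof (rule nth_equalityI)
      show "length (cf x) = length C" using cf_len len by simp
      fix i assume "i < length (cf x)"
      then have i: "i \<le> n" using cf_len by (simp add: less_Suc_eq_le)
      have Ci: "C ! i \<in> {1..m}" using ent len i by simp
      have gx: "gg i \<otimes> x \<in> carrier G" using ggG[OF i] x by simp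
      have "gg i \<otimes> x \<in> E (C ! i)"
      proof (cases "i = 0")
        case True then show ?thesis using x unfolding gg_def by simp
      next
        case False
        then have "i \<in> {1..length g}" using i unfolding n_def by simp
        then show ?thesis using xi False unfolding gg_def by simp
      qed
      then show "cf x ! i = C ! i" using cf_nth[OF i] lab_iff[OF gx Ci] by simp
    qed
    then show ?thesis using x by blast
  qed
  have Hex: "\<forall>t\<in>{1..p}. \<exists>hh. hh \<in> carrier G \<and> (\<forall>x\<in>carrier G. A t (cf x) = B t (cf (hh \<otimes> x)) \<and>
      (A t (cf x) = 0 \<or> A t (cf x) = 1) \<and> (B t (cf x) = 0 \<or> B t (cf x) = 1))"
  proof
    fix t assume t: "t \<in> {1..p}"
    then obtain i j k where i: "i \<in> {1..m}" and j: "j \<le> n" and k: "k \<le> n"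
      and eqs: "\<forall>C\<in>Con G g E m. A t C = (if C ! j = i then 1 else 0) \<and> B t C = (if C ! k = i then 1 else 0)"
      using subsys unfolding is_Eq_equation_def n_def by blast
    define hh where "hh = inv (gg k) \<otimes> gg j"
    have hhG: "hh \<in> carrier G" unfolding hh_def using ggG j k by simp
    have "\<forall>x\<in>carrier G. A t (cf x) = B t (cf (hh \<otimes> x)) \<and>
      (A t (cf x) = 0 \<or> A t (cf x) = 1) \<and> (B t (cf x) = 0 \<or> B t (cf x) = 1)"
    proof
      fix x assume x: "x \<in> carrier G"
      have hx: "hh \<otimes> x \<in> carrier G" using hhG x by simp
      have e: "gg k \<otimes> (hh \<otimes> x) = gg j \<otimes> x"
        unfolding hh_def using ggG[OF j] ggG[OF k] x by (simp add: m_assoc[symmetric])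
      have a: "A t (cf x) = (if cf x ! j = i then 1 else 0)" using eqs cf_in[OF x] by simp
      have b: "B t (cf x) = (if cf x ! k = i then 1 else 0)" using eqs cf_in[OF x] by simp
      have b': "B t (cf (hh \<otimes> x)) = (if cf (hh \<otimes> x) ! k = i then 1 else 0)" using eqs cf_in[OF hx] by simp
      have "cf (hh \<otimes> x) ! k = lab (gg j \<otimes> x)" using cf_nth[OF k] e by simp
      moreover have "cf x ! j = lab (gg j \<otimes> x)" using cf_nth[OF j] by simp
      ultimately show "A t (cf x) = B t (cf (hh \<otimes> x)) \<and>
        (A t (cf x) = 0 \<or> A t (cf x) = 1) \<and> (B t (cf x) = 0 \<or> B t (cf x) = 1)"
        using a b b' by simp
    qed
    then show "\<exists>hh. hh \<in> carrier G \<and> (\<forall>x\<in>carrier G. A t (cf x) = B t (cf (hh \<otimes> x)) \<and>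
      (A t (cf x) = 0 \<or> A t (cf x) = 1) \<and> (B t (cf x) = 0 \<or> B t (cf x) = 1))" using hhG by blast
  qed
  obtain H where H: "\<forall>t\<in>{1..p}. H t \<in> carrier G \<and> (\<forall>x\<in>carrier G. A t (cf x) = B t (cf (H t \<otimes> x)) \<and>
      (A t (cf x) = 0 \<or> A t (cf x) = 1) \<and> (B t (cf x) = 0 \<or> B t (cf x) = 1))"
    using bchoice[OF Hex] by (elim exE) (erule that)
  obtain C0 where C0: "{C \<in> Con G g E m. A (\<pi> 1) C = 1} = {C0}" using one_entry card_1_singletonE by blast
  then have C0C: "C0 \<in> Con G g E m" "A (\<pi> 1) C0 = 1" by auto
  obtain x0 where x0: "x0 \<in> carrier G" "cf x0 = C0" using cf_surj[OF C0C(1)] by blast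
  have pin: "\<pi> i \<in> {1..p}" if "i \<in> {1..p}" for i using permutes_in_image[OF perm] that by simp
  have finC: "finite (Con G g E m)" using ell by (metis card.infinite zero_neq_numeral)
  interpret c: cfg G cf "Con G g E m" p "\<lambda>i. A (\<pi> i)" "\<lambda>i. B (\<pi> i)" "\<lambda>i. H (\<pi> i)" C0 x0
  proof (unfold_locales, goal_cases)
    case (1 x) then show ?case using cf_in by simp
  next
    case 2 then show ?case using finC .
  next
    case 3 then show ?case using ell by simp
  next
    case (4 i x) then show ?case using H pin by blast
  next
    case (5 i x) then show ?case using H pin by blast
  next
    case (6 i) then show ?case using H pin by blast
  next
    case (7 i x) then show ?case using H pin by blast
  next
    case (8 x)
    have "(\<Sum>i\<in>{1..p}. B (\<pi> i) (cf x) - A (\<pi> i) (cf x)) = (\<Sum>t\<in>{1..p}. B t (cf x) - A t (cf x))"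
      using sum.permute[OF perm, of "\<lambda>t. B t (cf x) - A t (cf x)"] by (simp add: comp_def)
    then show ?case using sum_one cf_in[OF 8] by simp
  next
    case (9 i x)
    then have "i \<in> {1..p-1}" by simp
    then show ?case using nonneg cf_in[OF 9(3)] by fastforce
  next
    case (10 x)
    show ?case
    proof
      assume "A (\<pi> 1) (cf x) = 1"
      then have "cf x \<in> {C \<in> Con G g E m. A (\<pi> 1) C = 1}" using cf_in[OF 10] by simp
      then show "cf x = C0" using C0 by (metis singletonD)
    next
      assume "cf x = C0" then show "A (\<pi> 1) (cf x) = 1" using C0C by simp
    qed
  next
    case 11 then show ?case using x0 by simp
  next
    case 12 then show ?case using x0 by simp
  qed
  show ?thesis by (rule c.cp32)
qed

end

theorem mainTheorem6:
  fixes G :: "('a, 'b) monoid_scheme"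
    and g :: "'a list" and E :: "nat \<Rightarrow> 'a set" and m :: nat
    and p :: nat and A B :: "nat \<Rightarrow> nat list \<Rightarrow> int" and \<pi> :: "nat \<Rightarrow> nat"
  assumes grp: "group G"
    and g_in: "set g \<subseteq> carrier G"
    and part: "is_partition G E m"
    and subsys: "\<forall>t\<in>{1..p}. is_Eq_equation G g E m (A t) (B t)"
    and sum_one: "\<forall>C\<in>Con G g E m. (\<Sum>t\<in>{1..p}. B t C - A t C) = 1"
    and perm: "\<pi> permutes {1..p}"
    and nonneg: "\<forall>i\<in>{1..p-1}. \<forall>C\<in>Con G g E m. B (\<pi> i) C - A (\<pi> (i + 1)) C \<ge> 0"
    and ell: "card (Con G g E m) = 3"
    and one_entry: "card {C \<in> Con G g E m. A (\<pi> 1) C = 1} = 1"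
    and nofree: "\<not> has_free_subgroup_rank2 G"
  shows "tarski_number G = 5"
  using tarski5[OF grp nofree group.main_aux[OF grp g_in part subsys sum_one perm nonneg ell one_entry]] .

end
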